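(* The $\mathcal{C}$-module $\mathfrak{n}$ is an ideal of $\widehat{\mathfrak{H}^{0}}$ with respect to both the harmonic product $\ast_\hbar$ and the shuffle product $\mathrm{sh}_\hbar$; that is, $\mathfrak n\ast_\hbar\widehat{\mathfrak H^0}\subset\mathfrak n$ and $\mathfrak n\,\mathrm{sh}_\hbar\,\widehat{\mathfrak H^0}\subset\mathfrak n$.
   Context: Let $\mathcal{C}=\mathbb{Q}[\hbar]$ ($\hbar$ formal), $\mathfrak{H}=\mathcal{C}\langle a,b\rangle$ the non-commutative polynomial ring. For $k\ge1$, $g_k=ba^k$. $A=\{\hbar b\}\cup\{ba^k\mid k\ge1\}$, $\mathcal{C}\langle A\rangle$ the $\mathcal{C}$-subalgebra generated by $1$ and $A$, $\mathfrak z$ the $\mathcal C$-span of $A$, $\widehat{\mathfrak H^0}=\mathcal C+\sum_{k\ge1}\mathcal C\langle A\rangle g_k$. Let $\mathfrak n_0$ be the $\mathcal C$-span of $(\hbar b)^{\alpha_1}g_{\beta_1+1}\cdots(\hbar b)^{\alpha_r}g_{\beta_r+1}$ with $r\ge1$, $\alpha_i,\beta_i\ge0$ and $\alpha_s\ge1,\beta_t\ge1$ for some $1\le s\le t\le r$; $\mathfrak n=\mathfrak n_0+\hbar\widehat{\mathfrak H^0}$. Harmonic product: $\circ_\hbar$ symmetric $\mathcal C$-bilinear on $\mathfrak z$ with $(\hbar b)\circ_\hbar(\hbar b)=\hbar\cdot\hbar b$, $(\hbar b)\circ_\hbar g_k=\hbar g_k$, $g_k\circ_\hbar g_l=g_{k+l}$;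 $\ast_\hbar$ on $\mathcal{C}\langle A\rangle$ is $\mathcal C$-bilinear with $w\ast_\hbar1=1\ast_\hbar w=w$, $(wu)\ast_\hbar(w'v)=(w\ast_\hbar w'v)u+(wu\ast_\hbar w')v+(w\ast_\hbar w')(u\circ_\hbar v)$ ($u,v\in A$). Shuffle product $\mathrm{sh}_\hbar$ on $\mathfrak H$: $\mathcal C$-bilinear with $w\,\mathrm{sh}_\hbar\,1=1\,\mathrm{sh}_\hbar\,w=w$, $wa\,\mathrm{sh}_\hbar\,w'a=(wa\,\mathrm{sh}_\hbar\,w'+w\,\mathrm{sh}_\hbar\,w'a+\hbar(w\,\mathrm{sh}_\hbar\,w'))a$, $wb\,\mathrm{sh}_\hbar\,w'=w\,\mathrm{sh}_\hbar\,w'b=(w\,\mathrm{sh}_\hbar\,w')b$. *)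

theory Defs
  imports "HOL-Computational_Algebra.Polynomial"
begin

type_synonym C = "rat poly"

definition hbar :: C where "hbar = [:0, 1:]"

text \<open>Letters a, b; words; elements of the non-commutative polynomial ring
  C<a,b> are finitely supported maps word => C (finiteness holds for all
  elements actually considered: they are finite C-linear combinations).\<close>
datatype ab = La | Lb
type_synonym word = "ab list"
type_synonym 'w lin = "'w \<Rightarrow> C"
type_synonym H = "word lin"

definition supp :: "'w lin \<Rightarrow> 'w set" where
  "supp f = {w. f w \<noteq> 0}"

definition delta :: "'w \<Rightarrow> 'w lin" where
  "delta w = (\<lambda>v. if v = w then 1 else 0)"

definition smul :: "C \<Rightarrow> 'w lin \<Rightarrow> 'w lin" where
  "smul c f = (\<lambda>w. c * f w)"

inductive_set cspan :: "'w lin set \<Rightarrow> 'w lin set" for S where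
  zero: "(\<lambda>_. 0) \<in> cspan S"
| step: "s \<in> S \<Longrightarrow> x \<in> cspan S \<Longrightarrow> (\<lambda>w. c * s w + x w) \<in> cspan S"

text \<open>Appending a letter on the right of every word of a linear combination.
  We work with reversed words, so this is prepending in the reversed word.\<close>
definition rcons :: "'l \<Rightarrow> 'l list lin \<Rightarrow> 'l list lin" where
  "rcons x f = (\<lambda>w. case w of [] \<Rightarrow> 0 | y # w' \<Rightarrow> if y = x then f w' else 0)"

text \<open>On reversed words: the head of the list is the last letter.\<close>
fun sh_rev :: "word \<Rightarrow> word \<Rightarrow> H" where
  "sh_rev [] v = delta v"
| "sh_rev (x # u) [] = delta (x # u)"
| "sh_rev (Lb # u) v = rcons Lb (sh_rev u v)"
| "sh_rev (La # u) (Lb # v) = rcons Lb (sh_rev (La # u) v)"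
| "sh_rev (La # u) (La # v) =
     rcons La (\<lambda>w. sh_rev (La # u) v w + sh_rev u (La # v) w + hbar * sh_rev u v w)"

definition sh_word :: "word \<Rightarrow> word \<Rightarrow> H" where
  "sh_word u v = (\<lambda>w. sh_rev (rev u) (rev v) (rev w))"

definition shuffle :: "H \<Rightarrow> H \<Rightarrow> H" where
  "shuffle x y = (\<lambda>w. \<Sum>u\<in>supp x. \<Sum>v\<in>supp y. x u * y v * sh_word u v w)"

text \<open>Letter k :: nat of the alphabet A stands for hbar*b if k = 0 and for
  g_k = b a^k if k >= 1.  C<A> is free on A (the map below is injective),
  so the harmonic product is defined on A-words and transported.\<close>

definition circ_coeff :: "nat \<Rightarrow> nat \<Rightarrow> C" where
  "circ_coeff k l = (if k = 0 \<or> l = 0 then hbar else 1)"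
  \<comment> \<open>z_k o z_l = circ_coeff k l * z_(k+l): (hb)o(hb)=hbar hb, (hb)o g_k = hbar g_k, g_k o g_l = g_(k+l)\<close>

fun har_rev :: "nat list \<Rightarrow> nat list \<Rightarrow> nat list lin" where
  "har_rev [] v = delta v"
| "har_rev (x # u) [] = delta (x # u)"
| "har_rev (x # u) (y # v) =
     (\<lambda>w. rcons x (har_rev u (y # v)) w + rcons y (har_rev (x # u) v) w
          + circ_coeff x y * rcons (x + y) (har_rev u v) w)"

definition har_word :: "nat list \<Rightarrow> nat list \<Rightarrow> nat list lin" where
  "har_word u v = (\<lambda>w. har_rev (rev u) (rev v) (rev w))"

definition harm :: "nat list lin \<Rightarrow> nat list lin \<Rightarrow> nat list lin" where
  "harm X Y = (\<lambda>w. \<Sum>u\<in>supp X. \<Sum>v\<in>supp Y. X u * Y v * har_word u v w)"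

definition flat :: "nat list \<Rightarrow> word" where
  "flat W = concat (map (\<lambda>k. Lb # replicate k La) W)"

definition aw :: "nat list \<Rightarrow> H" where
  "aw W = smul (hbar ^ length (filter (\<lambda>k. k = 0) W)) (delta (flat W))"

definition iota :: "nat list lin \<Rightarrow> H" where
  "iota X = (\<lambda>w. \<Sum>U\<in>supp X. X U * aw U w)"

text \<open>H0hat = C + sum_k C<A> g_k: span of the empty word and of all A-words
  ending in some g_k, k >= 1.\<close>
definition H0hat :: "H set" where
  "H0hat = cspan (aw ` {W. W = [] \<or> (W \<noteq> [] \<and> last W \<ge> 1)})"

definition n0_word :: "nat list \<Rightarrow> bool" where
  "n0_word W \<longleftrightarrow> (\<exists>ps :: (nat \<times> nat) list. ps \<noteq> [] \<and>
      W = concat (map (\<lambda>(al, be). replicate al 0 @ [be + 1]) ps) \<and>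
      (\<exists>s t. s \<le> t \<and> t < length ps \<and> fst (ps ! s) \<ge> 1 \<and> snd (ps ! t) \<ge> 1))"

definition n0 :: "H set" where
  "n0 = cspan (aw ` {W. n0_word W})"

definition nset :: "H set" where
  "nset = {(\<lambda>w. x w + hbar * y w) | x y. x \<in> n0 \<and> y \<in> H0hat}"

end

theory Submission
  imports Defs
begin


lemma hbar_nz[simp]: "hbar \<noteq> 0" by (simp add: hbar_def)

lemma rcons_nil[simp]: "rcons x f [] = 0" by (simp add: rcons_def)
lemma rcons_cons[simp]: "rcons x f (y # w) = (if y = x then f w else 0)" by (simp add: rcons_def)

fun bbc :: "word \<Rightarrow> nat" where
  "bbc [] = 0"
| "bbc (La # r) = bbc r"
| "bbc (Lb # r) = (case r of Lb # _ \<Rightarrow> Suc (bbc r) | _ \<Rightarrow> bbc r)"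

definition hdb :: "word \<Rightarrow> bool" where "hdb r \<longleftrightarrow> r \<noteq> [] \<and> hd r = Lb"

lemma hdb_simps[simp]: "\<not> hdb []" "hdb (Lb # r)" "\<not> hdb (La # r)"
  by (auto simp: hdb_def)

lemma bbc_b[simp]: "bbc (Lb # r) = bbc r + (if hdb r then 1 else 0)"
  by (cases r; cases "hd r") (auto simp: hdb_def)
declare bbc.simps(3)[simp del]

fun Nr :: "word \<Rightarrow> bool" where
  "Nr [] = False"
| "Nr (La # La # r) = (Nr (La # r) \<or> 0 < bbc r)"
| "Nr (x # r) = Nr r"

lemma Nr_b[simp]: "Nr (Lb # r) = Nr r" by simp
lemma Nr_a: "Nr (La # r) = (Nr r \<or> (r \<noteq> [] \<and> hd r = La \<and> 0 < bbc (tl r)))"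
proof (cases r)
  case (Cons y r') then show ?thesis by (cases y) auto
qed simp
lemma Nr_a_mono: "Nr r \<Longrightarrow> Nr (La # r)"
  by (simp add: Nr_a)
lemma Nr_a_cases: "Nr (La # r) \<Longrightarrow> \<not> Nr r \<Longrightarrow> \<exists>r'. r = La # r' \<and> 0 < bbc r'"
  by (cases r) (auto simp: Nr_a)

definition Phi :: "word \<Rightarrow> word \<Rightarrow> nat" where
  "Phi u v = bbc u + bbc v + (if hdb u \<and> hdb v then 1 else 0)"

lemma sh_a_a: "sh_rev (La # u) (La # v) (z # w) = (if z = La then
   sh_rev (La # u) v w + sh_rev u (La # v) w + hbar * sh_rev u v w else 0)"
  by simp
lemma sh_a_a_nil: "sh_rev (La # u) (La # v) [] = 0" by simp

lemma sh_hd: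
  assumes "sh_rev u v w \<noteq> 0" shows "hdb w \<longleftrightarrow> hdb u \<or> hdb v"
  using assms
proof (cases "(u, v)" rule: sh_rev.cases)
  case (1 v) then show ?thesis using assms by (auto simp: delta_def split: if_splits) next
  case (2 x u) then show ?thesis using assms by (auto simp: delta_def split: if_splits) next
  case (3 u va vb) then show ?thesis using assms by (cases w) (auto split: if_splits) next
  case (4 u v) then show ?thesis using assms by (cases w) (auto split: if_splits) next
  case (5 u v) then show ?thesis using assms by (cases w) (auto split: if_splits)
qed

lemma sh_len: "sh_rev u v w \<noteq> 0 \<Longrightarrow> length w \<le> length u + length v"
proof (induction u v arbitrary: w rule: sh_rev.induct)
  case (1 v) then show ?case by (auto simp: delta_def split: if_splits) next
  case (2 x u) then show ?case by (auto simp: delta_def split: if_splits) next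
  case (3 u va vb)
  then obtain w' where w: "w = Lb # w'" and nz: "sh_rev u (va # vb) w' \<noteq> 0"
    by (cases w) (auto split: if_splits)
  show ?case using 3(1)[OF nz] by (simp add: w)
next
  case (4 u v)
  then obtain w' where w: "w = Lb # w'" and nz: "sh_rev (La # u) v w' \<noteq> 0"
    by (cases w) (auto split: if_splits)
  show ?case using 4(1)[OF nz] by (simp add: w)
next
  case (5 u v)
  then obtain w' where w: "w = La # w'" and nz: "sh_rev (La # u) v w' + sh_rev u (La # v) w' + hbar * sh_rev u v w' \<noteq> 0"
    by (cases w) (auto split: if_splits)
  then have "sh_rev (La # u) v w' \<noteq> 0 \<or> sh_rev u (La # v) w' \<noteq> 0 \<or> sh_rev u v w' \<noteq> 0" by auto
  then show ?case
  proof (elim disjE)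
    assume h: "sh_rev (La # u) v w' \<noteq> 0" show ?case using 5(1)[OF h] by (simp add: w)
  next
    assume h: "sh_rev u (La # v) w' \<noteq> 0" show ?case using 5(2)[OF h] by (simp add: w)
  next
    assume h: "sh_rev u v w' \<noteq> 0" show ?case using 5(3)[OF h] by (simp add: w)
  qed
qed

lemma sh3_nz: "sh_rev (Lb # u) (va # vb) w \<noteq> 0 \<Longrightarrow> \<exists>w'. w = Lb # w' \<and> sh_rev u (va # vb) w' \<noteq> 0"
  by (cases w) (auto split: if_splits)
lemma sh4_nz: "sh_rev (La # u) (Lb # v) w \<noteq> 0 \<Longrightarrow> \<exists>w'. w = Lb # w' \<and> sh_rev (La # u) v w' \<noteq> 0"
  by (cases w) (auto split: if_splits)
lemma sh5_nz: "sh_rev (La # u) (La # v) w \<noteq> 0 \<Longrightarrow> \<exists>w'. w = La # w' \<and>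
   (sh_rev (La # u) v w' \<noteq> 0 \<or> sh_rev u (La # v) w' \<noteq> 0 \<or> sh_rev u v w' \<noteq> 0)"
proof -
  assume h: "sh_rev (La # u) (La # v) w \<noteq> 0"
  then obtain w' where w: "w = La # w'" by (cases w) (auto split: if_splits)
  then have "sh_rev (La # u) v w' + sh_rev u (La # v) w' + hbar * sh_rev u v w' \<noteq> 0" using h by simp
  then have "sh_rev (La # u) v w' \<noteq> 0 \<or> sh_rev u (La # v) w' \<noteq> 0 \<or> sh_rev u v w' \<noteq> 0" by auto
  then show ?thesis using w by blast
qed

lemma sh_nil: "sh_rev u v [] \<noteq> 0 \<Longrightarrow> u = [] \<and> v = []"
  by (cases "(u,v)" rule: sh_rev.cases) (auto simp: delta_def split: if_splits)

lemma sh_last: "sh_rev u v w \<noteq> 0 \<Longrightarrow> (u = [] \<or> last u = Lb) \<Longrightarrow> (v = [] \<or> last v = Lb)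
   \<Longrightarrow> (w = [] \<or> last w = Lb)"
proof (induction u v arbitrary: w rule: sh_rev.induct)
  case (1 v) then show ?case by (auto simp: delta_def split: if_splits) next
  case (2 x u) then show ?case by (auto simp: delta_def split: if_splits) next
  case (3 u va vb)
  then obtain w' where w: "w = Lb # w'" and nz: "sh_rev u (va # vb) w' \<noteq> 0" using sh3_nz by blast
  show ?case using 3(1)[OF nz] 3(3,4) by (cases w') (auto simp: w split: if_splits)
next
  case (4 u v)
  then obtain w' where w: "w = Lb # w'" and nz: "sh_rev (La # u) v w' \<noteq> 0" using sh4_nz by blast
  show ?case using 4(1)[OF nz] 4(3,4) by (cases w') (auto simp: w split: if_splits)
next
  case (5 u v)
  then obtain w' where w: "w = La # w'" and nz: "sh_rev (La # u) v w' \<noteq> 0 \<or> sh_rev u (La # v) w' \<noteq> 0 \<or> sh_rev u v w' \<noteq> 0"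
    using sh5_nz by blast
  have lu: "u \<noteq> []" "last u = Lb" using 5(5) by (auto split: if_splits)
  have lv: "v \<noteq> []" "last v = Lb" using 5(6) by (auto split: if_splits)
  from nz have "w' = [] \<or> last w' = Lb"
  proof (elim disjE)
    assume h: "sh_rev (La # u) v w' \<noteq> 0" show ?thesis using 5(1)[OF h] lu lv by auto
  next
    assume h: "sh_rev u (La # v) w' \<noteq> 0" show ?thesis using 5(2)[OF h] lu lv by auto
  next
    assume h: "sh_rev u v w' \<noteq> 0" show ?thesis using 5(3)[OF h] lu lv by auto
  qed
  moreover have "w' \<noteq> []" using nz lu lv sh_nil by blast
  ultimately show ?case by (simp add: w)
qed

lemma sh_bbc_mono: "sh_rev u v w \<noteq> 0 \<Longrightarrow> bbc u \<le> bbc w"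
proof (induction u v arbitrary: w rule: sh_rev.induct)
  case (1 v) then show ?case by (auto simp: delta_def split: if_splits) next
  case (2 x u) then show ?case by (auto simp: delta_def split: if_splits) next
  case (3 u va vb)
  then obtain w' where w: "w = Lb # w'" and nz: "sh_rev u (va # vb) w' \<noteq> 0"
    by (cases w) (auto split: if_splits)
  have "hdb u \<Longrightarrow> hdb w'" using sh_hd[OF nz] by auto
  then show ?case using 3(1)[OF nz] by (auto simp: w bbc_b)
next
  case (4 u v)
  then obtain w' where w: "w = Lb # w'" and nz: "sh_rev (La # u) v w' \<noteq> 0"
    by (cases w) (auto split: if_splits)
  show ?case using 4(1)[OF nz] by (auto simp: w bbc_b)
next
  case (5 u v)
  then obtain w' where w: "w = La # w'" and nz: "sh_rev (La # u) v w' + sh_rev u (La # v) w' + hbar * sh_rev u v w' \<noteq> 0"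
    by (cases w) (auto split: if_splits)
  then have "sh_rev (La # u) v w' \<noteq> 0 \<or> sh_rev u (La # v) w' \<noteq> 0 \<or> sh_rev u v w' \<noteq> 0" by auto
  then show ?case
  proof (elim disjE)
    assume h: "sh_rev (La # u) v w' \<noteq> 0" show ?case using 5(1)[OF h] by (simp add: w)
  next
    assume h: "sh_rev u (La # v) w' \<noteq> 0" show ?case using 5(2)[OF h] by (simp add: w)
  next
    assume h: "sh_rev u v w' \<noteq> 0" show ?case using 5(3)[OF h] by (simp add: w)
  qed
qed

lemma dvd_pow_le: "m \<le> n \<Longrightarrow> hbar ^ n dvd x \<Longrightarrow> hbar ^ m dvd (x::C)"
  using le_imp_power_dvd dvd_trans by blast

lemma dvd_pow_shift: "hbar ^ m dvd hbar ^ n * x \<Longrightarrow> hbar ^ (m + k) dvd hbar ^ (n + k) * (x::C)"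
  by (simp add: power_add mult.commute mult.left_commute)

lemma sh_phi: "hbar ^ bbc w dvd hbar ^ Phi u v * sh_rev u v w"
proof (induction u v arbitrary: w rule: sh_rev.induct)
  case (1 v) then show ?case by (auto simp: delta_def Phi_def) next
  case (2 x u) then show ?case by (auto simp: delta_def Phi_def) next
  case (3 u va vb)
  show ?case
  proof (cases w)
    case (Cons y w')
    show ?thesis
    proof (cases "y = Lb \<and> sh_rev u (va # vb) w' \<noteq> 0")
      case True
      have e: "Phi u (va # vb) + (if hdb w' then 1 else 0) = Phi (Lb # u) (va # vb)"
        using sh_hd[of u "va # vb" w'] True by (auto simp: Phi_def bbc_b)
      from dvd_pow_shift[OF "3.IH"[of w'], of "if hdb w' then 1 else 0"]
      show ?thesis using True by (simp add: Cons bbc_b e)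
    qed (auto simp: Cons)
  qed simp
next
  case (4 u v)
  show ?case
  proof (cases w)
    case (Cons y w')
    show ?thesis
    proof (cases "y = Lb \<and> sh_rev (La # u) v w' \<noteq> 0")
      case True
      have e: "Phi (La # u) v + (if hdb w' then 1 else 0) = Phi (La # u) (Lb # v)"
        using sh_hd[of "La # u" v w'] True by (auto simp: Phi_def bbc_b)
      from dvd_pow_shift[OF "4.IH"[of w'], of "if hdb w' then 1 else 0"]
      show ?thesis using True by (simp add: Cons bbc_b e)
    qed (auto simp: Cons)
  qed simp
next
  case (5 u v)
  show ?case
  proof (cases w)
    case (Cons y w')
    have p: "Phi (La # u) (La # v) = bbc u + bbc v" by (simp add: Phi_def)
    have t1: "hbar ^ bbc w' dvd hbar ^ (bbc u + bbc v) * sh_rev (La # u) v w'"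
      using "5.IH"(1)[of w'] by (simp add: Phi_def)
    have t2: "hbar ^ bbc w' dvd hbar ^ (bbc u + bbc v) * sh_rev u (La # v) w'"
      using "5.IH"(2)[of w'] by (simp add: Phi_def)
    have "Phi u v \<le> bbc u + bbc v + 1" by (simp add: Phi_def)
    then have "hbar ^ Phi u v * sh_rev u v w' dvd hbar ^ (bbc u + bbc v + 1) * sh_rev u v w'"
      by (rule mult_dvd_mono[OF le_imp_power_dvd dvd_refl])
    then have "hbar ^ bbc w' dvd hbar ^ (bbc u + bbc v + 1) * sh_rev u v w'"
      using "5.IH"(3)[of w'] dvd_trans by blast
    then have t3: "hbar ^ bbc w' dvd hbar ^ (bbc u + bbc v) * (hbar * sh_rev u v w')"
      by (simp add: power_add mult_ac)
    have "hbar ^ Phi (La # u) (La # v) * sh_rev (La # u) (La # v) w =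
      (if y = La then hbar ^ (bbc u + bbc v) * sh_rev (La # u) v w' + hbar ^ (bbc u + bbc v) * sh_rev u (La # v) w'
        + hbar ^ (bbc u + bbc v) * (hbar * sh_rev u v w') else 0)"
      by (cases y) (simp_all add: Cons p distrib_left)
    note eq = this
    show ?thesis unfolding eq using t1 t2 t3 by (cases y) (simp_all add: Cons dvd_add)
  qed simp
qed

definition E :: "word \<Rightarrow> nat" where "E r = (if Nr r then 0 else 1)"

lemma E_le1: "E r \<le> 1" by (simp add: E_def)
lemma E_b[simp]: "E (Lb # r) = E r" by (simp add: E_def)
lemma E_a_le: "E (La # r) \<le> E r" using Nr_a_mono by (simp add: E_def)

lemma dvd_mono2: "hbar ^ a dvd hbar ^ b * x \<Longrightarrow> a' \<le> a \<Longrightarrow> b \<le> b' \<Longrightarrow> hbar ^ a' dvd hbar ^ b' * (x::C)"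
proof -
  assume h: "hbar ^ a dvd hbar ^ b * x" and "a' \<le> a" "b \<le> b'"
  have "hbar ^ a' dvd hbar ^ a" using \<open>a' \<le> a\<close> by (rule le_imp_power_dvd)
  moreover have "hbar ^ b * x dvd hbar ^ b' * x" using \<open>b \<le> b'\<close> by (intro mult_dvd_mono le_imp_power_dvd) auto
  ultimately show ?thesis using h dvd_trans by blast
qed

lemma sh_N: "hbar ^ (bbc w + E w) dvd hbar ^ (Phi u v + E u) * sh_rev u v w"
proof (induction u v arbitrary: w rule: sh_rev.induct)
  case (1 v) then show ?case using E_le1[of v] by (auto simp: delta_def Phi_def E_def intro: le_imp_power_dvd) next
  case (2 x u) then show ?case by (auto simp: delta_def Phi_def) next
  case (3 u va vb)
  show ?case
  proof (cases "sh_rev (Lb # u) (va # vb) w = 0")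
    case False
    then obtain w' where w: "w = Lb # w'" and nz: "sh_rev u (va # vb) w' \<noteq> 0" using sh3_nz by blast
    have e: "Phi u (va # vb) + (if hdb w' then 1 else 0) = Phi (Lb # u) (va # vb)"
      using sh_hd[OF nz] by (auto simp: Phi_def)
    have "hbar ^ (bbc w' + E w' + (if hdb w' then 1 else 0)) dvd
       hbar ^ (Phi u (va # vb) + E u + (if hdb w' then 1 else 0)) * sh_rev u (va # vb) w'"
      by (rule dvd_pow_shift[OF "3.IH"])
    then show ?thesis using e by (simp add: w add_ac)
  qed simp
next
  case (4 u v)
  show ?case
  proof (cases "sh_rev (La # u) (Lb # v) w = 0")
    case False
    then obtain w' where w: "w = Lb # w'" and nz: "sh_rev (La # u) v w' \<noteq> 0" using sh4_nz by blast
    have e: "Phi (La # u) v + (if hdb w' then 1 else 0) = Phi (La # u) (Lb # v)"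
      using sh_hd[OF nz] by (auto simp: Phi_def)
    have "hbar ^ (bbc w' + E w' + (if hdb w' then 1 else 0)) dvd
       hbar ^ (Phi (La # u) v + E (La # u) + (if hdb w' then 1 else 0)) * sh_rev (La # u) v w'"
      by (rule dvd_pow_shift[OF "4.IH"])
    then show ?thesis using e by (simp add: w add_ac)
  qed simp
next
  case (5 u v)
  show ?case
  proof (cases w)
    case (Cons y w')
    show ?thesis
    proof (cases y)
      case Lb then show ?thesis by (simp add: Cons)
    next
      case La
      define P where "P = bbc u + bbc v + E (La # u)"
      have p: "Phi (La # u) (La # v) + E (La # u) = P" by (simp add: Phi_def P_def)
      have bw: "bbc w = bbc w'" by (simp add: Cons La)
      have t1: "hbar ^ (bbc w' + E (La # w')) dvd hbar ^ P * sh_rev (La # u) v w'"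
        using "5.IH"(1)[of w'] by (rule dvd_mono2) (auto simp: P_def Phi_def E_a_le)
      have t2: "hbar ^ (bbc w' + E (La # w')) dvd hbar ^ P * sh_rev u (La # v) w'"
      proof (cases "\<not> Nr u \<and> Nr (La # u)")
        case True
        then obtain u'' where u: "u = La # u''" and bu: "0 < bbc u''" using Nr_a_cases by blast
        show ?thesis
        proof (cases "sh_rev u (La # v) w' = 0")
          case False
          then obtain w'' where w'': "w' = La # w''" and nz: "sh_rev (La # u'') (La # v) w' \<noteq> 0"
            using sh5_nz[of u'' v w'] u by auto
          have "bbc (La # u'') \<le> bbc w'" using sh_bbc_mono[OF nz] .
          then have "Nr (La # w')" using bu by (simp add: w'')
          then have "E (La # w') = 0" by (simp add: E_def)
          moreover have "E (La # u) = 0" using True by (simp add: E_def)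
          moreover have "Phi u (La # v) = bbc u + bbc v" by (simp add: Phi_def u)
          ultimately show ?thesis using sh_phi[of w' u "La # v"] by (simp add: P_def)
        qed simp
      next
        case False
        then have "E u \<le> E (La # u)" by (auto simp: E_def)
        then show ?thesis using "5.IH"(2)[of w'] by (rule_tac dvd_mono2) (auto simp: P_def Phi_def E_a_le)
      qed
      have "Phi u v + E u \<le> P + 1"
      proof (cases "\<not> Nr u \<and> Nr (La # u)")
        case True
        then obtain u'' where u: "u = La # u''" using Nr_a_cases by blast
        then show ?thesis by (simp add: Phi_def P_def E_def)
      next
        case False
        then have "E u \<le> E (La # u)" by (auto simp: E_def)
        then show ?thesis by (simp add: Phi_def P_def)
      qed
      then have "hbar ^ (bbc w' + E (La # w')) dvd hbar ^ (P + 1) * sh_rev u v w'"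
        using "5.IH"(3)[of w'] by (rule_tac dvd_mono2) (auto simp: E_a_le)
      then have t3: "hbar ^ (bbc w' + E (La # w')) dvd hbar ^ P * (hbar * sh_rev u v w')"
        by (simp add: power_add mult_ac)
      have eq: "hbar ^ (Phi (La # u) (La # v) + E (La # u)) * sh_rev (La # u) (La # v) w =
        hbar ^ P * sh_rev (La # u) v w' + hbar ^ P * sh_rev u (La # v) w' + hbar ^ P * (hbar * sh_rev u v w')"
        unfolding p by (simp add: Cons La distrib_left)
      show ?thesis unfolding eq bw using t1 t2 t3 by (simp add: Cons La dvd_add)
    qed
  qed simp
qed



fun Mr :: "nat list \<Rightarrow> bool" where
  "Mr [] = False"
| "Mr (x # R) = (Mr R \<or> (2 \<le> x \<and> 0 \<in> set R))"

lemma har_step: "har_rev (x # u) (y # v) (z # w) =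
   (if z = x then har_rev u (y # v) w else 0) + (if z = y then har_rev (x # u) v w else 0)
   + circ_coeff x y * (if z = x + y then har_rev u v w else 0)"
  by simp

lemma har3_nz: "har_rev (x # u) (y # v) w \<noteq> 0 \<Longrightarrow> \<exists>w'.
   (w = x # w' \<and> har_rev u (y # v) w' \<noteq> 0) \<or> (w = y # w' \<and> har_rev (x # u) v w' \<noteq> 0)
   \<or> (w = (x + y) # w' \<and> har_rev u v w' \<noteq> 0)"
proof -
  assume h: "har_rev (x # u) (y # v) w \<noteq> 0"
  then obtain z w' where w: "w = z # w'" by (cases w) auto
  from h have "(if z = x then har_rev u (y # v) w' else 0) + (if z = y then har_rev (x # u) v w' else 0)
   + circ_coeff x y * (if z = x + y then har_rev u v w' else 0) \<noteq> 0" unfolding w har_step .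
  then have "(z = x \<and> har_rev u (y # v) w' \<noteq> 0) \<or> (z = y \<and> har_rev (x # u) v w' \<noteq> 0)
   \<or> (z = x + y \<and> har_rev u v w' \<noteq> 0)" by (auto split: if_splits)
  then show ?thesis using w by blast
qed

lemma har_hd: "har_rev u v w \<noteq> 0 \<Longrightarrow> (u = [] \<or> 1 \<le> hd u) \<Longrightarrow> (v = [] \<or> 1 \<le> hd v)
   \<Longrightarrow> (w = [] \<or> 1 \<le> hd w)"
proof (cases "(u, v)" rule: har_rev.cases)
  case (3 x u' y v')
  assume "har_rev u v w \<noteq> 0" "u = [] \<or> 1 \<le> hd u" "v = [] \<or> 1 \<le> hd v"
  then show ?thesis using har3_nz[of x u' y v' w] 3 by auto
qed (auto simp: delta_def split: if_splits)

lemma har_len: "har_rev u v w \<noteq> 0 \<Longrightarrow> length w \<le> length u + length v \<and> (\<forall>z\<in>set w. z \<le> sum_list u + sum_list v)"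
proof (induction u v arbitrary: w rule: har_rev.induct)
  case (3 x u y v)
  from har3_nz[OF 3(4)] obtain w' where
    "(w = x # w' \<and> har_rev u (y # v) w' \<noteq> 0) \<or> (w = y # w' \<and> har_rev (x # u) v w' \<noteq> 0)
   \<or> (w = (x + y) # w' \<and> har_rev u v w' \<noteq> 0)" by blast
  then show ?case
  proof (elim disjE conjE)
    assume "w = x # w'" "har_rev u (y # v) w' \<noteq> 0"
    then show ?case using 3(1)[of w'] by fastforce
  next
    assume "w = y # w'" "har_rev (x # u) v w' \<noteq> 0"
    then show ?case using 3(2)[of w'] by fastforce
  next
    assume "w = (x + y) # w'" "har_rev u v w' \<noteq> 0"
    then show ?case using 3(3)[of w'] by fastforce
  qed
qed (auto simp: delta_def split: if_splits intro: member_le_sum_list trans_le_add2)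

lemma har_zero: "0 \<in> set u \<Longrightarrow> 0 \<notin> set w \<Longrightarrow> hbar dvd har_rev u v w"
proof (induction u v arbitrary: w rule: har_rev.induct)
  case (3 x u y v)
  show ?case
  proof (cases w)
    case (Cons z w')
    have t1: "hbar dvd (if z = x then har_rev u (y # v) w' else 0)"
      using 3(1)[of w'] 3(4,5) by (auto simp: Cons)
    have t2: "hbar dvd (if z = y then har_rev (x # u) v w' else 0)"
      using 3(2)[of w'] 3(4,5) by (auto simp: Cons)
    have t3: "hbar dvd circ_coeff x y * (if z = x + y then har_rev u v w' else 0)"
      using 3(3)[of w'] 3(4,5) by (auto simp: Cons circ_coeff_def)
    show ?thesis unfolding Cons har_step using t1 t2 t3 by (intro dvd_add)
  qed simp
qed (auto simp: delta_def)

lemma har_M: "Mr u \<Longrightarrow> \<not> Mr w \<Longrightarrow> hbar dvd har_rev u v w"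
proof (induction u v arbitrary: w rule: har_rev.induct)
  case (3 x u y v)
  show ?case
  proof (cases w)
    case (Cons z w')
    have t1: "hbar dvd (if z = x then har_rev u (y # v) w' else 0)"
    proof (cases "z = x")
      case True
      show ?thesis
      proof (cases "Mr u")
        case True then show ?thesis using 3(1)[of w'] 3(5) by (auto simp: Cons)
      next
        case False
        then have "2 \<le> x" "0 \<in> set u" using 3(4) by auto
        then have "0 \<notin> set w'" using 3(5) \<open>z = x\<close> by (auto simp: Cons)
        then show ?thesis using har_zero[OF \<open>0 \<in> set u\<close>] by auto
      qed
    qed simp
    have t2: "hbar dvd (if z = y then har_rev (x # u) v w' else 0)"
      using 3(2)[of w'] 3(4,5) by (auto simp: Cons)
    have t3: "hbar dvd circ_coeff x y * (if z = x + y then har_rev u v w' else 0)"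
    proof (cases "z = x + y")
      case True
      show ?thesis
      proof (cases "Mr u")
        case True then show ?thesis using 3(3)[of w'] 3(5) by (auto simp: Cons)
      next
        case False
        then have "2 \<le> x" "0 \<in> set u" using 3(4) by auto
        then have "0 \<notin> set w'" using 3(5) \<open>z = x + y\<close> by (auto simp: Cons)
        then show ?thesis using har_zero[OF \<open>0 \<in> set u\<close>] by auto
      qed
    qed simp
    show ?thesis unfolding Cons har_step using t1 t2 t3 by (intro dvd_add)
  qed simp
qed (auto simp: delta_def)



lemma flat_Nil[simp]: "flat [] = []" by (simp add: flat_def)
lemma flat_Cons[simp]: "flat (k # W) = Lb # replicate k La @ flat W" by (simp add: flat_def)

lemma flat_hd: "flat W = [] \<or> hd (flat W) = Lb" by (cases W) auto

lemma rep_a_eq: "replicate k La @ xs = replicate k' La @ ys \<Longrightarrow> (xs = [] \<or> hd xs = Lb) \<Longrightarrow>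
   (ys = [] \<or> hd ys = Lb) \<Longrightarrow> k = k' \<and> xs = ys"
proof (induction k arbitrary: k')
  case 0 then show ?case by (cases k') auto
next
  case (Suc k) then show ?case by (cases k') auto
qed

lemma flat_inj: "flat U = flat V \<Longrightarrow> U = V"
proof (induction U arbitrary: V)
  case Nil then show ?case by (cases V) auto
next
  case (Cons k U)
  then obtain k' V' where V: "V = k' # V'" by (cases V) auto
  then have "replicate k La @ flat U = replicate k' La @ flat V'" using Cons.prems by simp
  then have "k = k' \<and> flat U = flat V'" using flat_hd[of U] flat_hd[of V'] by (intro rep_a_eq) auto
  then show ?case using Cons.IH V by auto
qed

definition flatr :: "nat list \<Rightarrow> word" where
  "flatr R = concat (map (\<lambda>k. replicate k La @ [Lb]) R)"

lemma flatr_Nil[simp]: "flatr [] = []" by (simp add: flatr_def)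
lemma flatr_Cons[simp]: "flatr (k # R) = replicate k La @ Lb # flatr R" by (simp add: flatr_def)
lemma flatr_snoc: "flatr (R @ [k]) = flatr R @ replicate k La @ [Lb]" by (simp add: flatr_def)

lemma rev_flat: "rev (flat W) = flatr (rev W)"
  by (induction W) (auto simp: flatr_snoc)

definition zc :: "nat list \<Rightarrow> nat" where "zc W = length (filter (\<lambda>k. k = 0) W)"

lemma zc_rev[simp]: "zc (rev W) = zc W" by (simp add: zc_def rev_filter[symmetric])

lemma bbc_rep[simp]: "bbc (replicate k La @ r) = bbc r" by (induction k) auto

lemma hdb_rep[simp]: "hdb (replicate k La @ Lb # r) = (k = 0)" by (cases k) (auto simp: hdb_def)

lemma hdb_flatr: "hdb (flatr R) \<longleftrightarrow> R \<noteq> [] \<and> hd R = 0"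
  by (cases R) (auto simp: hdb_rep)

lemma bbc_flatr: "bbc (flatr R) = zc (tl R)"
proof (induction R)
  case (Cons k R) then show ?case by (cases R) (auto simp: hdb_flatr zc_def)
qed (simp add: zc_def)

lemma bbc_b_flatr: "bbc (Lb # flatr R) = zc R"
  using bbc_flatr[of R] by (cases R) (auto simp: hdb_flatr zc_def)

lemma zc_pos: "0 < zc R \<longleftrightarrow> 0 \<in> set R" by (simp add: zc_def filter_empty_conv)

lemma Nr_rep: "Nr (replicate k La @ Lb # F) = (Nr F \<or> (2 \<le> k \<and> 0 < bbc (Lb # F)))"
proof (induction k)
  case (Suc k)
  show ?case
  proof (cases k)
    case 0 then show ?thesis by (simp add: Nr_a)
  next
    case (Suc k')
    then show ?thesis using Suc.IH by (auto simp: Nr_a)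
  qed
qed simp

lemma Nr_flatr: "Nr (flatr R) = Mr R"
proof (induction R)
  case (Cons k R)
  show ?case using Cons.IH by (simp add: Nr_rep bbc_b_flatr zc_pos del: bbc_b)
qed simp

fun Mn :: "nat list \<Rightarrow> bool" where
  "Mn [] = False"
| "Mn (x # W) = (Mn W \<or> (x = 0 \<and> (\<exists>y\<in>set W. 2 \<le> y)))"

lemma Mr_snoc: "Mr (R @ [x]) = (Mr R \<or> (x = 0 \<and> (\<exists>y\<in>set R. 2 \<le> y)))"
  by (induction R) auto

lemma Mr_rev: "Mr (rev W) = Mn W"
  by (induction W) (auto simp: Mr_snoc)

definition H0idx :: "nat list \<Rightarrow> bool" where "H0idx W \<longleftrightarrow> W = [] \<or> 1 \<le> last W"

lemma H0idx_rev: "H0idx W \<longleftrightarrow> (rev W = [] \<or> 1 \<le> hd (rev W))"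
  by (cases W rule: rev_cases) (auto simp: H0idx_def)

lemma bbc_flat: "H0idx W \<Longrightarrow> bbc (rev (flat W)) = zc W"
proof -
  assume "H0idx W"
  then have "zc (tl (rev W)) = zc (rev W)" by (cases "rev W") (auto simp: zc_def H0idx_rev)
  then show ?thesis by (simp add: rev_flat bbc_flatr)
qed

lemma Nr_flat: "Nr (rev (flat W)) = Mn W"
  by (simp add: rev_flat Nr_flatr Mr_rev)

lemma hdb_flat: "H0idx W \<Longrightarrow> \<not> hdb (rev (flat W))"
  unfolding rev_flat hdb_flatr H0idx_rev by auto

lemma flatr_last: "flatr R = [] \<or> last (flatr R) = Lb"
  by (induction R) auto

lemma flat_hd_a: "H0idx W \<Longrightarrow> rev (flat W) = [] \<or> hd (rev (flat W)) = La"
  unfolding rev_flat H0idx_rev by (cases "rev W"; cases "hd (rev W)") auto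

lemma ex_flatr: "r = [] \<or> last r = Lb \<Longrightarrow> \<exists>R. r = flatr R"
proof (induction r)
  case (Cons x r)
  show ?case
  proof (cases "r = []")
    case True then have "x = Lb" using Cons.prems by simp
    then show ?thesis using True by (intro exI[of _ "[0]"]) simp
  next
    case False
    then obtain R where R: "r = flatr R" using Cons by auto
    with False obtain k R' where R': "R = k # R'" by (cases R) auto
    show ?thesis
    proof (cases x)
      case La then show ?thesis by (intro exI[of _ "Suc k # R'"]) (simp add: R R')
    next
      case Lb then show ?thesis by (intro exI[of _ "0 # R"]) (simp add: R)
    qed
  qed
qed (rule exI[of _ "[]"], simp)

lemma ex_flat: "w = [] \<or> (hd (rev w) = La \<and> last (rev w) = Lb) \<Longrightarrow> \<exists>W. H0idx W \<and> w = flat W"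
proof -
  assume h: "w = [] \<or> (hd (rev w) = La \<and> last (rev w) = Lb)"
  then obtain R where R: "rev w = flatr R" using ex_flatr[of "rev w"] by auto
  have "R = [] \<or> 1 \<le> hd R"
  proof (cases R)
    case (Cons k R') then show ?thesis using h R by (cases k) (auto)
  qed simp
  then have "H0idx (rev R)" by (simp add: H0idx_rev)
  moreover have "w = flat (rev R)" using R by (metis rev_flat rev_rev_ident)
  ultimately show ?thesis by blast
qed



definition blk :: "nat \<times> nat \<Rightarrow> nat list" where "blk p = replicate (fst p) 0 @ [snd p + 1]"

lemma blk_eq: "(\<lambda>(al, be). replicate al 0 @ [be + 1]) = blk"
  by (auto simp: blk_def fun_eq_iff)

definition Qidx :: "(nat \<times> nat) list \<Rightarrow> bool" where
  "Qidx ps \<longleftrightarrow> (\<exists>s t. s \<le> t \<and> t < length ps \<and> 1 \<le> fst (ps ! s) \<and> 1 \<le> snd (ps ! t))"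

lemma Qidx_Nil[simp]: "\<not> Qidx []" by (simp add: Qidx_def)

lemma Qidx_Cons: "Qidx (p # ps) \<longleftrightarrow> Qidx ps \<or> (1 \<le> fst p \<and> (1 \<le> snd p \<or> (\<exists>q\<in>set ps. 1 \<le> snd q)))"
proof
  assume "Qidx (p # ps)"
  then obtain s t where st: "s \<le> t" "t < length (p # ps)" "1 \<le> fst ((p # ps) ! s)" "1 \<le> snd ((p # ps) ! t)"
    unfolding Qidx_def by blast
  show "Qidx ps \<or> (1 \<le> fst p \<and> (1 \<le> snd p \<or> (\<exists>q\<in>set ps. 1 \<le> snd q)))"
  proof (cases s)
    case 0
    then have "1 \<le> fst p" using st by simp
    moreover have "1 \<le> snd p \<or> (\<exists>q\<in>set ps. 1 \<le> snd q)"
    proof (cases t)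
      case 0 then show ?thesis using st by simp
    next
      case (Suc t') then show ?thesis using st by (auto intro: nth_mem)
    qed
    ultimately show ?thesis by blast
  next
    case (Suc s')
    then obtain t' where "t = Suc t'" using st by (cases t) auto
    then have "Qidx ps" unfolding Qidx_def using st Suc by (intro exI[of _ s'] exI[of _ t']) auto
    then show ?thesis by blast
  qed
next
  assume "Qidx ps \<or> (1 \<le> fst p \<and> (1 \<le> snd p \<or> (\<exists>q\<in>set ps. 1 \<le> snd q)))"
  then show "Qidx (p # ps)"
  proof (elim disjE conjE)
    assume "Qidx ps"
    then obtain s t where st: "s \<le> t" "t < length ps" "1 \<le> fst (ps ! s)" "1 \<le> snd (ps ! t)"
      unfolding Qidx_def by blast
    then show ?thesis unfolding Qidx_def by (intro exI[of _ "Suc s"] exI[of _ "Suc t"]) auto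
  next
    assume "1 \<le> fst p" "1 \<le> snd p"
    then show ?thesis unfolding Qidx_def by (intro exI[of _ 0] exI[of _ 0]) auto
  next
    assume "1 \<le> fst p" "\<exists>q\<in>set ps. 1 \<le> snd q"
    then obtain i where "i < length ps" "1 \<le> snd (ps ! i)" by (auto simp: in_set_conv_nth)
    then show ?thesis using \<open>1 \<le> fst p\<close> unfolding Qidx_def by (intro exI[of _ 0] exI[of _ "Suc i"]) auto
  qed
qed

lemma Mn_rep: "Mn (replicate k 0 @ r) = (Mn r \<or> (1 \<le> k \<and> (\<exists>y\<in>set r. 2 \<le> y)))"
  by (induction k) auto

lemma Mn_blk: "Mn (blk p @ r) = (Mn r \<or> (1 \<le> fst p \<and> (1 \<le> snd p \<or> (\<exists>y\<in>set r. 2 \<le> y))))"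
  by (auto simp: blk_def Mn_rep)

lemma set_concat_ge2: "(\<exists>y\<in>set (concat (map blk ps)). 2 \<le> y) \<longleftrightarrow> (\<exists>q\<in>set ps. 1 \<le> snd q)"
  by (auto simp: blk_def)

lemma Q_Mn: "Qidx ps \<longleftrightarrow> Mn (concat (map blk ps))"
proof (induction ps)
  case (Cons p ps)
  show ?case using Cons.IH set_concat_ge2[of ps] by (simp add: Qidx_Cons Mn_blk)
qed simp

fun tb :: "nat list \<Rightarrow> (nat \<times> nat) list" where
  "tb [] = []"
| "tb (0 # W) = (case tb W of [] \<Rightarrow> [] | p # ps \<Rightarrow> (Suc (fst p), snd p) # ps)"
| "tb (Suc k # W) = (0, k) # tb W"

lemma tb_ok: "H0idx W \<Longrightarrow> concat (map blk (tb W)) = W \<and> (W \<noteq> [] \<longrightarrow> tb W \<noteq> [])"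
proof (induction W rule: tb.induct)
  case 1 then show ?case by simp
next
  case (2 W)
  then have "W \<noteq> []" by (auto simp: H0idx_def)
  then have "H0idx W" using 2(2) by (auto simp: H0idx_def)
  then have ih: "concat (map blk (tb W)) = W" "tb W \<noteq> []" using 2(1) \<open>W \<noteq> []\<close> by auto
  then obtain p ps where tbW: "tb W = p # ps" by (cases "tb W") auto
  have "concat (map blk (tb (0 # W))) = 0 # concat (map blk (tb W))"
    by (simp add: tbW blk_def)
  then show ?case using ih by (simp add: tbW)
next
  case (3 k W)
  then have "H0idx W" by (cases W) (auto simp: H0idx_def)
  then show ?case using 3(1) by (simp add: blk_def)
qed

lemma n0_word_iff: "n0_word W \<longleftrightarrow> W \<noteq> [] \<and> 1 \<le> last W \<and> Mn W"
proof
  assume "n0_word W"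
  then obtain ps where ps: "ps \<noteq> []" "W = concat (map blk ps)" "Qidx ps"
    unfolding n0_word_def Qidx_def blk_eq by blast
  then obtain ps' p where "ps = ps' @ [p]" by (cases ps rule: rev_cases) auto
  then have "W \<noteq> [] \<and> 1 \<le> last W" using ps by (simp add: blk_def)
  then show "W \<noteq> [] \<and> 1 \<le> last W \<and> Mn W" using ps Q_Mn by auto
next
  assume h: "W \<noteq> [] \<and> 1 \<le> last W \<and> Mn W"
  then have "H0idx W" by (simp add: H0idx_def)
  from tb_ok[OF this] h have "concat (map blk (tb W)) = W" "tb W \<noteq> []" by auto
  moreover then have "Qidx (tb W)" using h Q_Mn by simp
  ultimately show "n0_word W" unfolding n0_word_def Qidx_def blk_eq by metis
qed

lemma n0_H0: "n0_word W \<Longrightarrow> H0idx W" by (simp add: n0_word_iff H0idx_def)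

lemma n0_iff_Mn: "H0idx W \<Longrightarrow> n0_word W \<longleftrightarrow> Mn W"
  by (cases W) (auto simp: n0_word_iff H0idx_def)



lemma aw_eq: "aw W w = (if w = flat W then hbar ^ zc W else 0)"
  by (simp add: aw_def smul_def delta_def zc_def)

lemma supp_iff: "w \<in> supp f \<longleftrightarrow> f w \<noteq> 0" by (simp add: supp_def)

lemma cspan_aw_char1:
  "f \<in> cspan (aw ` {W. P W}) \<Longrightarrow> finite (supp f) \<and> (\<forall>w. f w \<noteq> 0 \<longrightarrow> (\<exists>W. P W \<and> w = flat W \<and> hbar ^ zc W dvd f w))"
proof (induction rule: cspan.induct)
  case zero then show ?case by (simp add: supp_def)
next
  case (step s x c)
  then obtain W where W: "P W" "s = aw W" by auto
  have "supp (\<lambda>w. c * s w + x w) \<subseteq> insert (flat W) (supp x)"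
    by (auto simp: supp_def W aw_eq)
  then have fin: "finite (supp (\<lambda>w. c * s w + x w))" using step.IH finite_subset by auto
  have "\<exists>W. P W \<and> w = flat W \<and> hbar ^ zc W dvd (c * s w + x w)" if nz: "c * s w + x w \<noteq> 0" for w
  proof (cases "w = flat W")
    case True
    have "hbar ^ zc W dvd x w"
    proof (cases "x w = 0")
      case False
      then obtain W' where "P W'" "w = flat W'" "hbar ^ zc W' dvd x w" using step.IH by blast
      then show ?thesis using True flat_inj by metis
    qed simp
    then have "hbar ^ zc W dvd (c * s w + x w)" using True by (simp add: W aw_eq)
    then show ?thesis using True W by blast
  next
    case False
    then have "x w \<noteq> 0" "c * s w + x w = x w" using nz by (auto simp: W aw_eq)
    then show ?thesis using step.IH by metis
  qed
  then show ?case using fin by blast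
qed

lemma cspan_aw_char2:
  assumes "finite F"
  shows "\<forall>f. supp f \<subseteq> F \<longrightarrow> (\<forall>w. f w \<noteq> 0 \<longrightarrow> (\<exists>W. P W \<and> w = flat W \<and> hbar ^ zc W dvd f w))
     \<longrightarrow> f \<in> cspan (aw ` {W. P W})"
  using assms
proof (induction F rule: finite_induct)
  case empty
  show ?case
  proof (intro allI impI)
    fix f :: H assume "supp f \<subseteq> {}"
    then have "f = (\<lambda>_. 0)" by (auto simp: supp_def)
    then show "f \<in> cspan (aw ` {W. P W})" by (simp add: cspan.zero)
  qed
next
  case (insert w0 F)
  show ?case
  proof (intro allI impI)
    fix f :: H
    assume s: "supp f \<subseteq> insert w0 F" and c: "\<forall>w. f w \<noteq> 0 \<longrightarrow> (\<exists>W. P W \<and> w = flat W \<and> hbar ^ zc W dvd f w)"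
    define g where "g = f(w0 := 0)"
    have "supp g \<subseteq> F" using s by (auto simp: supp_def g_def)
    moreover have "\<forall>w. g w \<noteq> 0 \<longrightarrow> (\<exists>W. P W \<and> w = flat W \<and> hbar ^ zc W dvd g w)"
      using c by (auto simp: g_def)
    ultimately have g: "g \<in> cspan (aw ` {W. P W})" using insert.IH by blast
    show "f \<in> cspan (aw ` {W. P W})"
    proof (cases "f w0 = 0")
      case True
      then have "f = g" by (auto simp: g_def)
      then show ?thesis using g by simp
    next
      case False
      then obtain W k where W: "P W" "w0 = flat W" "f w0 = hbar ^ zc W * k" using c by (metis dvdE)
      have fw: "f (flat W) = hbar ^ zc W * k" using W by simp
      have "f = (\<lambda>w. k * aw W w + g w)"
        using W(2) by (auto simp: fun_eq_iff g_def aw_eq fw mult.commute)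
      moreover have "aw W \<in> aw ` {W. P W}" using W by auto
      ultimately show ?thesis using cspan.step[OF _ g] by metis
    qed
  qed
qed

lemma cspan_aw_char:
  "f \<in> cspan (aw ` {W. P W}) \<longleftrightarrow> finite (supp f) \<and> (\<forall>w. f w \<noteq> 0 \<longrightarrow> (\<exists>W. P W \<and> w = flat W \<and> hbar ^ zc W dvd f w))"
  using cspan_aw_char1[of f P] cspan_aw_char2[of "supp f" P] by (auto simp: supp_def)

lemma H0hat_eq: "H0hat = cspan (aw ` {W. H0idx W})"
proof -
  have "{W. W = [] \<or> (W \<noteq> [] \<and> last W \<ge> 1)} = {W. H0idx W}" by (auto simp: H0idx_def)
  then show ?thesis by (simp add: H0hat_def)
qed

lemma H0hat_char: "f \<in> H0hat \<longleftrightarrow> finite (supp f) \<and> (\<forall>w. f w \<noteq> 0 \<longrightarrow> (\<exists>W. H0idx W \<and> w = flat W \<and> hbar ^ zc W dvd f w))"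
  unfolding H0hat_eq cspan_aw_char ..

lemma n0_char: "f \<in> n0 \<longleftrightarrow> finite (supp f) \<and> (\<forall>w. f w \<noteq> 0 \<longrightarrow> (\<exists>W. n0_word W \<and> w = flat W \<and> hbar ^ zc W dvd f w))"
  unfolding n0_def cspan_aw_char ..

definition e0 :: "nat list \<Rightarrow> nat" where "e0 W = (if n0_word W then 0 else 1)"

definition Cn :: "H \<Rightarrow> bool" where
  "Cn f \<longleftrightarrow> finite (supp f) \<and> (\<forall>w. f w \<noteq> 0 \<longrightarrow> (\<exists>W. H0idx W \<and> w = flat W \<and> hbar ^ (zc W + e0 W) dvd f w))"

lemma nset_Cn: "f \<in> nset \<Longrightarrow> Cn f"
proof -
  assume "f \<in> nset"
  then obtain x y where f: "f = (\<lambda>w. x w + hbar * y w)" and x: "x \<in> n0" and y: "y \<in> H0hat"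
    by (auto simp: nset_def)
  have xc: "finite (supp x)" "\<And>w. x w \<noteq> 0 \<Longrightarrow> \<exists>W. n0_word W \<and> w = flat W \<and> hbar ^ zc W dvd x w"
    using x n0_char by auto
  have yc: "finite (supp y)" "\<And>w. y w \<noteq> 0 \<Longrightarrow> \<exists>W. H0idx W \<and> w = flat W \<and> hbar ^ zc W dvd y w"
    using y H0hat_char by auto
  have "supp f \<subseteq> supp x \<union> supp y" by (auto simp: supp_def f)
  then have fin: "finite (supp f)" using finite_subset[OF _ finite_UnI[OF xc(1) yc(1)]] by blast
  have "\<exists>W. H0idx W \<and> w = flat W \<and> hbar ^ (zc W + e0 W) dvd f w" if nz: "f w \<noteq> 0" for w
  proof (cases "x w = 0")
    case True
    then have "y w \<noteq> 0" using nz by (auto simp: f)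
    then obtain W where W: "H0idx W" "w = flat W" "hbar ^ zc W dvd y w" using yc by blast
    then have "hbar ^ (zc W + 1) dvd hbar * y w" by (simp add: mult.commute mult_dvd_mono)
    then have "hbar ^ (zc W + e0 W) dvd f w" using True
      by (rule_tac dvd_pow_le[of _ "zc W + 1"]) (auto simp: f e0_def)
    then show ?thesis using W by blast
  next
    case False
    then obtain W where W: "n0_word W" "w = flat W" "hbar ^ zc W dvd x w" using xc by blast
    have "hbar ^ zc W dvd y w"
    proof (cases "y w = 0")
      case False
      then obtain W' where "w = flat W'" "hbar ^ zc W' dvd y w" using yc by blast
      then show ?thesis using W flat_inj by metis
    qed simp
    then have "hbar ^ zc W dvd f w" using W by (simp add: f)
    then show ?thesis using W n0_H0 by (auto simp: e0_def)
  qed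
  then show ?thesis using fin by (simp add: Cn_def)
qed

lemma Cn_nset: "Cn f \<Longrightarrow> f \<in> nset"
proof -
  assume C: "Cn f"
  then have fin: "finite (supp f)" and c: "\<And>w. f w \<noteq> 0 \<Longrightarrow> \<exists>W. H0idx W \<and> w = flat W \<and> hbar ^ (zc W + e0 W) dvd f w"
    by (auto simp: Cn_def)
  define Q where "Q w \<longleftrightarrow> (\<exists>W. w = flat W \<and> n0_word W)" for w
  define x where "x w = (if Q w then f w else 0)" for w
  define y where "y w = (if Q w then 0 else f w div hbar)" for w
  have f: "f = (\<lambda>w. x w + hbar * y w)"
  proof
    fix w
    show "f w = x w + hbar * y w"
    proof (cases "Q w \<or> f w = 0")
      case False
      then obtain W where W: "H0idx W" "w = flat W" "hbar ^ (zc W + e0 W) dvd f w" using c by blast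
      have "\<not> n0_word W" using False W by (auto simp: Q_def)
      then have "hbar dvd f w" using W(3) by (simp add: e0_def) (metis dvd_mult_left)
      then show ?thesis using False by (simp add: x_def y_def)
    qed (auto simp: x_def y_def)
  qed
  have "x \<in> n0"
    unfolding n0_char
  proof
    show "finite (supp x)" using fin by (rule finite_subset[rotated]) (auto simp: supp_def x_def)
    show "\<forall>w. x w \<noteq> 0 \<longrightarrow> (\<exists>W. n0_word W \<and> w = flat W \<and> hbar ^ zc W dvd x w)"
    proof (intro allI impI)
      fix w assume nz: "x w \<noteq> 0"
      then have Qw: "Q w" by (auto simp: x_def split: if_splits)
      then obtain W0 where W0: "w = flat W0" "n0_word W0" unfolding Q_def by blast
      have xw: "x w = f w" using Qw by (simp add: x_def)
      have "f w \<noteq> 0" using nz xw by simp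
      then obtain W where W: "w = flat W" "hbar ^ (zc W + e0 W) dvd f w" using c by metis
      then have "W = W0" using W0 flat_inj by metis
      then show "\<exists>W. n0_word W \<and> w = flat W \<and> hbar ^ zc W dvd x w" using W W0 xw by (auto simp: e0_def)
    qed
  qed
  moreover have "y \<in> H0hat"
    unfolding H0hat_char
  proof
    show "finite (supp y)" using fin by (rule finite_subset[rotated]) (auto simp: supp_def y_def)
    show "\<forall>w. y w \<noteq> 0 \<longrightarrow> (\<exists>W. H0idx W \<and> w = flat W \<and> hbar ^ zc W dvd y w)"
    proof (intro allI impI)
      fix w assume nz: "y w \<noteq> 0"
      then have nQ: "\<not> Q w" and yw: "y w = f w div hbar" and fnz: "f w \<noteq> 0" by (auto simp: y_def split: if_splits)
      obtain W where W: "H0idx W" "w = flat W" "hbar ^ (zc W + e0 W) dvd f w" using c fnz by blast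
      have "\<not> n0_word W" using nQ W by (auto simp: Q_def)
      then obtain k where "f w = hbar ^ (zc W + 1) * k" using W(3) by (auto simp: e0_def elim: dvdE)
      then have "y w = hbar ^ zc W * k" by (simp add: yw mult_ac)
      then show "\<exists>W. H0idx W \<and> w = flat W \<and> hbar ^ zc W dvd y w" using W by auto
    qed
  qed
  ultimately show "f \<in> nset" unfolding nset_def using f by blast
qed

lemma nset_char: "f \<in> nset \<longleftrightarrow> Cn f" using nset_Cn Cn_nset by blast



lemma sum2_nz: "(\<Sum>u\<in>A. \<Sum>v\<in>B. g u v) \<noteq> (0::C) \<Longrightarrow> \<exists>u\<in>A. \<exists>v\<in>B. g u v \<noteq> 0"
  by (metis (mono_tags, lifting) sum.neutral)

lemma sum2_dvd: "(\<And>u v. u \<in> A \<Longrightarrow> v \<in> B \<Longrightarrow> d dvd g u v) \<Longrightarrow> d dvd (\<Sum>u\<in>A. \<Sum>v\<in>B. g u v :: C)"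
  by (simp add: dvd_sum)

lemma iota_flat: "finite (supp X) \<Longrightarrow> iota X (flat U) = X U * hbar ^ zc U"
proof -
  assume fin: "finite (supp X)"
  have "iota X (flat U) = (\<Sum>V\<in>supp X. if V = U then X V * hbar ^ zc V else 0)"
    unfolding iota_def by (rule sum.cong) (auto simp: aw_eq dest: flat_inj)
  also have "\<dots> = X U * hbar ^ zc U" using fin by (simp add: supp_def)
  finally show ?thesis .
qed

lemma iota_other: "(\<And>U. w \<noteq> flat U) \<Longrightarrow> iota X w = 0"
  by (simp add: iota_def aw_eq)

lemma iota_supp: "supp (iota X) \<subseteq> flat ` supp X"
proof
  fix w assume "w \<in> supp (iota X)"
  then have "(\<Sum>U\<in>supp X. X U * aw U w) \<noteq> 0" by (simp add: supp_def iota_def)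
  then obtain U where "U \<in> supp X" "X U * aw U w \<noteq> 0" by (metis (mono_tags, lifting) sum.neutral)
  then show "w \<in> flat ` supp X" by (auto simp: aw_eq split: if_splits)
qed

lemma harm_fin: "finite (supp X) \<Longrightarrow> finite (supp Y) \<Longrightarrow> finite (supp (harm X Y))"
proof -
  assume fx: "finite (supp X)" and fy: "finite (supp Y)"
  have "supp (harm X Y) \<subseteq> (\<Union>u\<in>supp X. \<Union>v\<in>supp Y. {w. set w \<subseteq> {..sum_list u + sum_list v} \<and> length w \<le> length u + length v})"
  proof
    fix w assume "w \<in> supp (harm X Y)"
    then have "(\<Sum>u\<in>supp X. \<Sum>v\<in>supp Y. X u * Y v * har_word u v w) \<noteq> 0" by (simp add: supp_def harm_def)
    then have "\<exists>u\<in>supp X. \<exists>v\<in>supp Y. X u * Y v * har_word u v w \<noteq> 0" by (rule sum2_nz)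
      then obtain u v where uv: "u \<in> supp X" "v \<in> supp Y" "X u * Y v * har_word u v w \<noteq> 0" by blast
    then have "har_rev (rev u) (rev v) (rev w) \<noteq> 0" by (simp add: har_word_def)
    from har_len[OF this] show "w \<in> (\<Union>u\<in>supp X. \<Union>v\<in>supp Y. {w. set w \<subseteq> {..sum_list u + sum_list v} \<and> length w \<le> length u + length v})"
      using uv by (auto simp: sum_list_rev)
  qed
  moreover have "finite (\<Union>u\<in>supp X. \<Union>v\<in>supp Y. {w. set w \<subseteq> {..sum_list u + sum_list v} \<and> length w \<le> length u + length v})"
    using fx fy by (auto intro!: finite_lists_length_le)
  ultimately show ?thesis by (rule finite_subset)
qed

lemma harm_part:
  assumes fx: "finite (supp X)" and fy: "finite (supp Y)" and nx: "iota X \<in> nset" and hy: "iota Y \<in> H0hat"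
  shows "iota (harm X Y) \<in> nset"
proof -
  have hX: "H0idx U \<and> hbar ^ e0 U dvd X U" if "X U \<noteq> 0" for U
  proof -
    have nz: "iota X (flat U) \<noteq> 0" using that iota_flat[OF fx] by simp
    from nx have "Cn (iota X)" by (rule nset_Cn)
    then obtain W where W: "H0idx W" "flat U = flat W" "hbar ^ (zc W + e0 W) dvd iota X (flat U)"
      using nz unfolding Cn_def by blast
    then have "W = U" using flat_inj by metis
    then have "hbar ^ e0 U * hbar ^ zc U dvd X U * hbar ^ zc U" using W(3) iota_flat[OF fx]
      by (simp add: power_add mult.commute)
    then show ?thesis using W \<open>W = U\<close> by simp
  qed
  have hY: "H0idx V" if "Y V \<noteq> 0" for V
  proof -
    have nz: "iota Y (flat V) \<noteq> 0" using that iota_flat[OF fy] by simp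
    then obtain W where W: "H0idx W" "flat V = flat W" using hy unfolding H0hat_char by blast
    then show ?thesis using flat_inj by metis
  qed
  have key: "H0idx R \<and> (\<not> n0_word R \<longrightarrow> hbar dvd X u * Y v * har_word u v R)"
    if nz: "X u \<noteq> 0" "Y v \<noteq> 0" "har_word u v R \<noteq> 0" for u v R
  proof -
    have h: "har_rev (rev u) (rev v) (rev R) \<noteq> 0" using nz by (simp add: har_word_def)
    have "H0idx R" using har_hd[OF h] hX[OF nz(1)] hY[OF nz(2)] by (simp add: H0idx_rev)
    moreover have "hbar dvd X u * Y v * har_word u v R" if nn: "\<not> n0_word R"
    proof (cases "n0_word u")
      case True
      then have "Mr (rev u)" by (simp add: n0_word_iff Mr_rev)
      moreover have "\<not> Mr (rev R)" using nn \<open>H0idx R\<close> by (simp add: n0_iff_Mn Mr_rev)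
      ultimately have "hbar dvd har_word u v R" using har_M by (simp add: har_word_def)
      then show ?thesis by simp
    next
      case False
      then have "hbar dvd X u" using hX[OF nz(1)] by (simp add: e0_def)
      then show ?thesis by simp
    qed
    ultimately show ?thesis by blast
  qed
  have fh: "finite (supp (harm X Y))" using harm_fin[OF fx fy] .
  have "Cn (iota (harm X Y))"
    unfolding Cn_def
  proof
    show "finite (supp (iota (harm X Y)))" using iota_supp[of "harm X Y"] fh finite_subset by blast
    show "\<forall>w. iota (harm X Y) w \<noteq> 0 \<longrightarrow> (\<exists>W. H0idx W \<and> w = flat W \<and> hbar ^ (zc W + e0 W) dvd iota (harm X Y) w)"
    proof (intro allI impI)
      fix w assume nzw: "iota (harm X Y) w \<noteq> 0"
      then obtain R where R: "w = flat R" using iota_other by metis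
      have val: "iota (harm X Y) w = harm X Y R * hbar ^ zc R" using iota_flat[OF fh] R by simp
      then have hnz: "(\<Sum>u\<in>supp X. \<Sum>v\<in>supp Y. X u * Y v * har_word u v R) \<noteq> 0"
        using nzw by (simp add: harm_def)
      then have "\<exists>u\<in>supp X. \<exists>v\<in>supp Y. X u * Y v * har_word u v R \<noteq> 0" by (rule sum2_nz)
      then obtain u v where "u \<in> supp X" "v \<in> supp Y" "X u * Y v * har_word u v R \<noteq> 0" by blast
      then have H: "H0idx R" using key by auto
      have "hbar ^ e0 R dvd harm X Y R"
      proof (cases "n0_word R")
        case False
        have "hbar dvd (\<Sum>u\<in>supp X. \<Sum>v\<in>supp Y. X u * Y v * har_word u v R)"
        proof (rule sum2_dvd)
          fix u v assume "u \<in> supp X" "v \<in> supp Y"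
          then show "hbar dvd X u * Y v * har_word u v R"
            using key[of u v R] False by (cases "har_word u v R = 0") (auto simp: supp_def)
        qed
        then show ?thesis using False by (simp add: e0_def harm_def)
      qed (simp add: e0_def)
      then have "hbar ^ e0 R * hbar ^ zc R dvd harm X Y R * hbar ^ zc R" by (rule mult_dvd_mono) simp
      then show "\<exists>W. H0idx W \<and> w = flat W \<and> hbar ^ (zc W + e0 W) dvd iota (harm X Y) w"
        using H R val by (auto simp: power_add mult.commute)
    qed
  qed
  then show ?thesis by (rule Cn_nset)
qed

lemma UNIV_ab: "(UNIV :: ab set) = {La, Lb}" by (auto intro: ab.exhaust)

lemma sh_part:
  assumes x: "x \<in> nset" and y: "y \<in> H0hat"
  shows "shuffle x y \<in> nset"
proof -
  have Cx: "Cn x" using x by (rule nset_Cn)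
  then have fx: "finite (supp x)" and cx: "\<And>w. x w \<noteq> 0 \<Longrightarrow> \<exists>U. H0idx U \<and> w = flat U \<and> hbar ^ (zc U + e0 U) dvd x w"
    by (auto simp: Cn_def)
  have fy: "finite (supp y)" and cy: "\<And>w. y w \<noteq> 0 \<Longrightarrow> \<exists>V. H0idx V \<and> w = flat V \<and> hbar ^ zc V dvd y w"
    using y by (auto simp: H0hat_char)
  have key: "\<exists>W. H0idx W \<and> w = flat W \<and> hbar ^ (zc W + e0 W) dvd x u * y v * sh_word u v w"
    if nz: "x u \<noteq> 0" "y v \<noteq> 0" "sh_word u v w \<noteq> 0" for u v w
  proof -
    obtain U where U: "H0idx U" "u = flat U" "hbar ^ (zc U + e0 U) dvd x u" using cx nz(1) by blast
    obtain V where V: "H0idx V" "v = flat V" "hbar ^ zc V dvd y v" using cy nz(2) by blast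
    have h: "sh_rev (rev u) (rev v) (rev w) \<noteq> 0" using nz by (simp add: sh_word_def)
    have "\<not> hdb (rev w)" using sh_hd[OF h] hdb_flat U V by simp
    then have hd: "rev w = [] \<or> hd (rev w) = La" by (cases "rev w"; cases "hd (rev w)") (auto simp: hdb_def)
    have "rev u = [] \<or> last (rev u) = Lb" "rev v = [] \<or> last (rev v) = Lb"
      using U V flatr_last by (auto simp: rev_flat)
    then have "rev w = [] \<or> last (rev w) = Lb" using sh_last[OF h] by blast
    then have "w = [] \<or> (hd (rev w) = La \<and> last (rev w) = Lb)" using hd by auto
    then obtain W where W: "H0idx W" "w = flat W" using ex_flat by blast
    have EW: "E (rev w) = e0 W" using W by (simp add: E_def e0_def Nr_flat n0_iff_Mn)
    have EU: "E (rev u) = e0 U" using U by (simp add: E_def e0_def Nr_flat n0_iff_Mn)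
    have P: "Phi (rev u) (rev v) = zc U + zc V" using U V by (simp add: Phi_def hdb_flat bbc_flat)
    have d: "hbar ^ (zc W + e0 W) dvd hbar ^ (zc U + zc V + e0 U) * sh_word u v w"
      using sh_N[of "rev w" "rev u" "rev v"] W EW EU P by (simp add: bbc_flat sh_word_def)
    obtain k1 where k1: "x u = hbar ^ (zc U + e0 U) * k1" using U(3) by (auto elim: dvdE)
    obtain k2 where k2: "y v = hbar ^ zc V * k2" using V(3) by (auto elim: dvdE)
    have eq: "x u * y v * sh_word u v w = (hbar ^ (zc U + zc V + e0 U) * sh_word u v w) * (k1 * k2)"
      by (simp add: k1 k2 power_add mult_ac)
    have "hbar ^ (zc W + e0 W) dvd (hbar ^ (zc U + zc V + e0 U) * sh_word u v w) * (k1 * k2)"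
      using d by (rule dvd_mult2)
    then have "hbar ^ (zc W + e0 W) dvd x u * y v * sh_word u v w" unfolding eq .
    then show ?thesis using W by blast
  qed
  have fin: "finite (supp (shuffle x y))"
  proof -
    have "supp (shuffle x y) \<subseteq> (\<Union>u\<in>supp x. \<Union>v\<in>supp y. {w. set w \<subseteq> UNIV \<and> length w \<le> length u + length v})"
    proof
      fix w assume "w \<in> supp (shuffle x y)"
      then have "(\<Sum>u\<in>supp x. \<Sum>v\<in>supp y. x u * y v * sh_word u v w) \<noteq> 0" by (simp add: supp_def shuffle_def)
      then have "\<exists>u\<in>supp x. \<exists>v\<in>supp y. x u * y v * sh_word u v w \<noteq> 0" by (rule sum2_nz)
      then obtain u v where uv: "u \<in> supp x" "v \<in> supp y" "x u * y v * sh_word u v w \<noteq> 0" by blast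
      then have "sh_rev (rev u) (rev v) (rev w) \<noteq> 0" by (simp add: sh_word_def)
      from sh_len[OF this] show "w \<in> (\<Union>u\<in>supp x. \<Union>v\<in>supp y. {w. set w \<subseteq> UNIV \<and> length w \<le> length u + length v})"
        using uv by auto
    qed
    moreover have "finite (\<Union>u\<in>supp x. \<Union>v\<in>supp y. {w. set w \<subseteq> (UNIV :: ab set) \<and> length w \<le> length u + length v})"
      using fx fy by (auto intro!: finite_lists_length_le simp: UNIV_ab)
    ultimately show ?thesis by (rule finite_subset)
  qed
  have "Cn (shuffle x y)"
    unfolding Cn_def
  proof
    show "finite (supp (shuffle x y))" by (rule fin)
    show "\<forall>w. shuffle x y w \<noteq> 0 \<longrightarrow> (\<exists>W. H0idx W \<and> w = flat W \<and> hbar ^ (zc W + e0 W) dvd shuffle x y w)"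
    proof (intro allI impI)
      fix w assume "shuffle x y w \<noteq> 0"
      then have "(\<Sum>u\<in>supp x. \<Sum>v\<in>supp y. x u * y v * sh_word u v w) \<noteq> 0" by (simp add: shuffle_def)
      then have "\<exists>u0\<in>supp x. \<exists>v0\<in>supp y. x u0 * y v0 * sh_word u0 v0 w \<noteq> 0" by (rule sum2_nz)
      then obtain u0 v0 where uv: "u0 \<in> supp x" "v0 \<in> supp y" "x u0 * y v0 * sh_word u0 v0 w \<noteq> 0" by blast
      then obtain W where W: "H0idx W" "w = flat W" using key[of u0 v0 w] by (auto simp: supp_def)
      have "hbar ^ (zc W + e0 W) dvd (\<Sum>u\<in>supp x. \<Sum>v\<in>supp y. x u * y v * sh_word u v w)"
      proof (rule sum2_dvd)
        fix u v assume uv: "u \<in> supp x" "v \<in> supp y"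
        show "hbar ^ (zc W + e0 W) dvd x u * y v * sh_word u v w"
        proof (cases "sh_word u v w = 0")
          case False
          then obtain W' where "w = flat W'" "hbar ^ (zc W' + e0 W') dvd x u * y v * sh_word u v w"
            using key[of u v w] uv by (auto simp: supp_def)
          then show ?thesis using W flat_inj by metis
        qed simp
      qed
      then show "\<exists>W. H0idx W \<and> w = flat W \<and> hbar ^ (zc W + e0 W) dvd shuffle x y w"
        using W by (auto simp: shuffle_def)
    qed
  qed
  then show ?thesis by (rule Cn_nset)
qed

theorem proposition3p7:
  shows "(\<forall>X Y. finite (supp X) \<longrightarrow> finite (supp Y) \<longrightarrow>
            iota X \<in> nset \<longrightarrow> iota Y \<in> H0hat \<longrightarrow> iota (harm X Y) \<in> nset)
       \<and> (\<forall>x \<in> nset. \<forall>y \<in> H0hat. shuffle x y \<in> nset)"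
  using harm_part sh_part by blast

end
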